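(* Fix a sequence of matchings and any non-negative load vector at the end of round $t_1$, and let $\mathcal{B}$ be an arbitrary subset of the tokens. Then for any subset of nodes $D \subseteq V$ and any round $t_2 > t_1$, \[ \Pr\Big[ \bigwedge_{i \in \mathcal{B}} \big(w_i^{(t_2)} \in D\big) \Big] \leq \prod_{i\in\mathcal{B}}\mathbf{M}_{w_i^{(t_1)},D}^{[t_1+1,t_2]} = \prod_{i \in \mathcal{B}} \Pr\big[ w_i^{(t_2)} \in D \big]. \]
   Context: $G=(V,E)$ has $n$ nodes; a matching $\mathbf{M}^{(t)}\subseteq E$ is identified with the symmetric matrix with entries $1/2$ on $(u,u),(v,v),(u,v),(v,u)$ for $\{u,v\}\in\mathbf{M}^{(t)}$, $1$ on the diagonal for unmatched nodes, $0$ elsewhere; $\mathbf{M}^{[a,b]}=\prod_{s=a}^b\mathbf{M}^{(s)}$ (identity if $a>b$), and $\mathbf{M}_{u,D}=\sum_{v\in D}\mathbf{M}_{u,v}$. Token-based description of the discrete protocol: tokens are distinguishable; $w^{(t)}_i$ is the node holding token $i$ at the end of round $t$, $x^{(t)}_u$ the number of tokens at $u$. If $u,v$ are matched in round $t$, all tokens at $u$ and $v$ are put in an urn; with probability $1/2$ node $u$ draws $\lceil (x^{(t-1)}_u+x^{(t-1)}_v)/2\rceil$ tokens uniformly at random without replacement, otherwise $\lfloor (x^{(t-1)}_u+x^{(t-1)}_v)/2\rfloor$ (independently over matched edges and rounds); $v$ gets the rest. Unmatched nodes keep their tokens. *)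

theory Defs
  imports "HOL-Probability.Probability"
begin

definition matching :: "'v set set \<Rightarrow> bool" where
  "matching Mt \<longleftrightarrow> (\<forall>e\<in>Mt. card e = 2) \<and> (\<forall>e\<in>Mt. \<forall>e'\<in>Mt. e \<noteq> e' \<longrightarrow> e \<inter> e' = {})"

definition match_matrix :: "'v set set \<Rightarrow> 'v \<Rightarrow> 'v \<Rightarrow> real" where
  "match_matrix Mt u v =
     (if u = v then (if \<exists>e\<in>Mt. u \<in> e then 1/2 else 1)
      else (if {u, v} \<in> Mt then 1/2 else 0))"

definition id_matrix :: "'v \<Rightarrow> 'v \<Rightarrow> real" where
  "id_matrix u v = (if u = v then 1 else 0)"

definition mat_mult :: "('v::finite \<Rightarrow> 'v \<Rightarrow> real) \<Rightarrow> ('v \<Rightarrow> 'v \<Rightarrow> real) \<Rightarrow> 'v \<Rightarrow> 'v \<Rightarrow> real" where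
  "mat_mult A B u v = (\<Sum>w\<in>UNIV. A u w * B w v)"

fun mat_prod_from :: "(nat \<Rightarrow> 'v set set) \<Rightarrow> nat \<Rightarrow> nat \<Rightarrow> 'v::finite \<Rightarrow> 'v \<Rightarrow> real" where
  "mat_prod_from M a 0 = id_matrix"
| "mat_prod_from M a (Suc n) = mat_mult (mat_prod_from M a n) (match_matrix (M (a + n)))"

text \<open>M^[a,b] = prod_{s=a}^b M^(s) (identity if a > b).\<close>
definition mat_interval :: "(nat \<Rightarrow> 'v set set) \<Rightarrow> nat \<Rightarrow> nat \<Rightarrow> 'v::finite \<Rightarrow> 'v \<Rightarrow> real" where
  "mat_interval M a b = mat_prod_from M a (Suc b - a)"

definition mat_row_set :: "('v \<Rightarrow> 'v \<Rightarrow> real) \<Rightarrow> 'v \<Rightarrow> 'v set \<Rightarrow> real" where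
  "mat_row_set A u D = (\<Sum>v\<in>D. A u v)"

text \<open>A configuration is a placement \<open>w :: 't \<Rightarrow> 'v\<close> of the (distinguishable) tokens on
  the nodes; the load of node u is \<open>card {i. w i = u}\<close>.
  For a matched edge e = {u,v} we take u = Min e (the paper's "node u").\<close>
definition urn_draw :: "'v::linorder set \<Rightarrow> ('t::finite \<Rightarrow> 'v) \<Rightarrow> 't set pmf" where
  "urn_draw e w =
     (let U = {i. w i \<in> e}; n = card U in
      bind_pmf (bernoulli_pmf (1/2)) (\<lambda>b.
        let k = (if b then (n + 1) div 2 else n div 2) in
        pmf_of_set {S. S \<subseteq> U \<and> card S = k}))"

definition matched_edge :: "'v set set \<Rightarrow> 'v \<Rightarrow> 'v set" where
  "matched_edge Mt x = (THE e. e \<in> Mt \<and> x \<in> e)"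

definition step_pmf :: "'v::{finite,linorder} set set \<Rightarrow> ('t::finite \<Rightarrow> 'v) \<Rightarrow> ('t \<Rightarrow> 'v) pmf" where
  "step_pmf Mt w =
     map_pmf (\<lambda>S i. if \<exists>e\<in>Mt. w i \<in> e
                      then (let e = matched_edge Mt (w i) in if i \<in> S e then Min e else Max e)
                      else w i)
             (Pi_pmf Mt {} (\<lambda>e. urn_draw e w))"

text \<open>Distribution of the placement after n further rounds, starting from placement w0
  at the end of round t1 (rounds t1+1, ..., t1+n use matchings M (t1+1), ..., M (t1+n)).\<close>
fun run_pmf :: "(nat \<Rightarrow> 'v::{finite,linorder} set set) \<Rightarrow> nat \<Rightarrow> ('t::finite \<Rightarrow> 'v) \<Rightarrow> nat \<Rightarrow> ('t \<Rightarrow> 'v) pmf" where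
  "run_pmf M t1 w0 0 = return_pmf w0"
| "run_pmf M t1 w0 (Suc n) = bind_pmf (run_pmf M t1 w0 n) (step_pmf (M (t1 + Suc n)))"

definition config_at :: "(nat \<Rightarrow> 'v::{finite,linorder} set set) \<Rightarrow> nat \<Rightarrow> ('t::finite \<Rightarrow> 'v) \<Rightarrow> nat \<Rightarrow> ('t \<Rightarrow> 'v) pmf" where
  "config_at M t1 w0 t2 = run_pmf M t1 w0 (t2 - t1)"

end

theory Submission
  imports Defs
begin


definition G :: "'a set \<Rightarrow> nat \<Rightarrow> 'a set \<Rightarrow> real \<Rightarrow> real \<Rightarrow> real" where
  "G W k T a b = (\<Sum>S\<in>{S. S \<subseteq> W \<and> card S = k}. \<Prod>i\<in>T. if i \<in> S then a else b)"

lemma subsets_insert_split: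
  assumes "z \<notin> W" "finite W"
  shows "{S. S \<subseteq> insert z W \<and> card S = Suc k} =
         {S. S \<subseteq> W \<and> card S = Suc k} \<union> insert z ` {S. S \<subseteq> W \<and> card S = k}"
proof (intro set_eqI iffI)
  fix S assume S: "S \<in> {S. S \<subseteq> insert z W \<and> card S = Suc k}"
  show "S \<in> {S. S \<subseteq> W \<and> card S = Suc k} \<union> insert z ` {S. S \<subseteq> W \<and> card S = k}"
  proof (cases "z \<in> S")
    case True
    have "finite S" using S by (metis (mono_tags, lifting) card.infinite mem_Collect_eq nat.distinct(1))
    hence "S - {z} \<subseteq> W" "card (S - {z}) = k" using S True by auto
    moreover have "S = insert z (S - {z})" using True by auto
    ultimately show ?thesis by blast
  next
    case False thus ?thesis using S by auto
  qed
next
  fix S assume "S \<in> {S. S \<subseteq> W \<and> card S = Suc k} \<union> insert z ` {S. S \<subseteq> W \<and> card S = k}"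
  thus "S \<in> {S. S \<subseteq> insert z W \<and> card S = Suc k}"
  proof
    assume "S \<in> insert z ` {S. S \<subseteq> W \<and> card S = k}"
    then obtain S0 where "S0 \<subseteq> W" "card S0 = k" "S = insert z S0" by auto
    moreover have "finite S0" using \<open>S0 \<subseteq> W\<close> assms
      by (metis finite_subset) 
    moreover have "z \<notin> S0" using \<open>S0 \<subseteq> W\<close> assms by blast
    ultimately show ?thesis using assms by auto
  qed auto
qed

lemma G_nonneg: "0 \<le> a \<Longrightarrow> 0 \<le> b \<Longrightarrow> 0 \<le> G W k T a b"
  unfolding G_def by (intro sum_nonneg prod_nonneg) auto

lemma prod_cong_mem:
  assumes "\<And>i. i \<in> T \<Longrightarrow> (i \<in> S \<longleftrightarrow> i \<in> S')"
  shows "(\<Prod>i\<in>T. if i \<in> S then a else b) = (\<Prod>i\<in>T. if i \<in> S' then (a::real) else b)"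
  using assms by (intro prod.cong) auto

lemma binom_even_rel: "Suc k * (2 * Suc k choose Suc k) = 2 * (2 * k + 1) * (2 * k choose k)"
proof -
  have e1: "(2*k+1) * (2*k choose k) = (2*k+1 choose Suc k) * Suc k"
    using Suc_times_binomial_eq[of "2*k" k] by simp
  have e3: "(2 * Suc k choose Suc k) * Suc k = (2*k+2) * (2*k+1 choose k)"
    using Suc_times_binomial_eq[of "2*k+1" "k"] by simp
  have e4: "(2*k+1 choose k) = (2*k+1 choose Suc k)"
    using binomial_symmetric[of "Suc k" "2*k+1"] by simp
  have "Suc k * (2 * Suc k choose Suc k) = (2*k+2) * (2*k+1 choose Suc k)"
    using e3 e4 by (simp only: mult.commute)
  also have "\<dots> = 2 * ((2*k+1 choose Suc k) * Suc k)" by simp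
  also have "\<dots> = 2 * ((2*k+1) * (2*k choose k))" using e1 by simp
  finally show ?thesis by simp
qed

lemma G_even:
  assumes "finite W" "card W = 2 * k" "T \<subseteq> W" "0 \<le> a" "0 \<le> b"
  shows "G W k T a b \<le> real (2 * k choose k) * ((a + b) / 2) ^ card T"
  using assms(1-3)
proof (induction k arbitrary: W T)
  case 0
  hence "W = {}" "T = {}" by auto
  thus ?case by (simp add: G_def cong: conj_cong)
next
  case (Suc k)
  define s where "s = (a + b) / 2"
  have s0: "0 \<le> s" using assms by (simp add: s_def)
  define f where "f S = (\<Prod>i\<in>T. if i \<in> S then a else b)" for S
  define P where "P = {S. S \<subseteq> W \<and> card S = Suc k}"
  have finT: "finite T" using Suc.prems finite_subset by blast
  show ?case
  proof (cases "T = {}")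
    case True
    thus ?thesis using Suc.prems by (simp add: G_def n_subsets)
  next
    case False
    then obtain x where xT: "x \<in> T" by blast
    have xW: "x \<in> W" using xT Suc.prems by blast
    have finP: "finite P" unfolding P_def using Suc.prems by simp
    have cardopp: "card {y \<in> W - {x}. (x \<in> S) \<noteq> (y \<in> S)} = Suc k" if "S \<in> P" for S
    proof (cases "x \<in> S")
      case True
      have "{y \<in> W - {x}. (x \<in> S) \<noteq> (y \<in> S)} = W - S" using True xW by auto
      moreover have "card (W - S) = Suc k" using that Suc.prems unfolding P_def
        by (subst card_Diff_subset) (auto intro: finite_subset)
      ultimately show ?thesis by simp
    next
      case False
      have "{y \<in> W - {x}. (x \<in> S) \<noteq> (y \<in> S)} = S" using False that unfolding P_def by auto
      thus ?thesis using that unfolding P_def by simp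
    qed
    define Q where "Q y = {S. S \<subseteq> W - {x, y} \<and> card S = k}" for y
    have splitP: "{S \<in> P. (x \<in> S) \<noteq> (y \<in> S)} = insert x ` Q y \<union> insert y ` Q y"
      if y: "y \<in> W - {x}" for y
    proof (intro set_eqI iffI)
      fix S assume S: "S \<in> {S \<in> P. (x \<in> S) \<noteq> (y \<in> S)}"
      have fS: "finite S" using S Suc.prems unfolding P_def using finite_subset by blast
      show "S \<in> insert x ` Q y \<union> insert y ` Q y"
      proof (cases "x \<in> S")
        case True
        hence "S - {x} \<in> Q y" "S = insert x (S - {x})" using S fS unfolding Q_def P_def by auto
        thus ?thesis by blast
      next
        case False
        hence "y \<in> S" using S by auto
        hence "S - {y} \<in> Q y" "S = insert y (S - {y})" using S fS False unfolding Q_def P_def by auto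
        thus ?thesis by blast
      qed
    next
      fix S assume "S \<in> insert x ` Q y \<union> insert y ` Q y"
      then obtain S0 where S0: "S0 \<in> Q y" "S = insert x S0 \<or> S = insert y S0" by blast
      have "finite S0" using S0 Suc.prems unfolding Q_def using finite_subset by blast
      moreover have "x \<notin> S0" "y \<notin> S0" using S0 unfolding Q_def by auto
      ultimately show "S \<in> {S \<in> P. (x \<in> S) \<noteq> (y \<in> S)}" using S0 y xW unfolding Q_def P_def by auto
    qed
    have sumy: "(\<Sum>S\<in>{S \<in> P. (x \<in> S) \<noteq> (y \<in> S)}. f S) =
        (\<Sum>S0\<in>Q y. f (insert x S0)) + (\<Sum>S0\<in>Q y. f (insert y S0))"
      if y: "y \<in> W - {x}" for y
    proof -
      have finQ: "finite (Q y)" unfolding Q_def using Suc.prems by simp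
      have inj1: "inj_on (insert x) (Q y)" unfolding Q_def by (rule inj_onI) blast
      have inj2: "inj_on (insert y) (Q y)" unfolding Q_def using y by (intro inj_onI) blast
      have disj: "insert x ` Q y \<inter> insert y ` Q y = {}" unfolding Q_def using y by auto
      have "sum f (insert x ` Q y \<union> insert y ` Q y) = sum f (insert x ` Q y) + sum f (insert y ` Q y)"
        by (rule sum.union_disjoint) (use finQ disj in auto)
      also have "\<dots> = (\<Sum>S0\<in>Q y. f (insert x S0)) + (\<Sum>S0\<in>Q y. f (insert y S0))"
        by (simp add: sum.reindex inj1 inj2)
      finally show ?thesis unfolding splitP[OF y] .
    qed
    have "real (Suc k) * G W (Suc k) T a b = (\<Sum>S\<in>P. real (Suc k) * f S)"
      unfolding G_def P_def f_def sum_distrib_left ..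
    also have "\<dots> = (\<Sum>S\<in>P. real (card {y \<in> W - {x}. (x \<in> S) \<noteq> (y \<in> S)}) * f S)"
      by (intro sum.cong refl) (simp only: cardopp)
    also have "\<dots> = (\<Sum>S\<in>P. \<Sum>y\<in>W - {x}. if (x \<in> S) \<noteq> (y \<in> S) then f S else 0)"
    proof (intro sum.cong refl)
      fix S
      have "(\<Sum>y\<in>W - {x}. if (x \<in> S) \<noteq> (y \<in> S) then f S else 0) = (\<Sum>y\<in>{y \<in> W - {x}. (x \<in> S) \<noteq> (y \<in> S)}. f S)"
        using Suc.prems by (intro sum.inter_filter[symmetric]) simp
      thus "real (card {y \<in> W - {x}. (x \<in> S) \<noteq> (y \<in> S)}) * f S = (\<Sum>y\<in>W - {x}. if (x \<in> S) \<noteq> (y \<in> S) then f S else 0)"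
        by simp
    qed
    also have "\<dots> = (\<Sum>y\<in>W - {x}. \<Sum>S\<in>P. if (x \<in> S) \<noteq> (y \<in> S) then f S else 0)"
      by (rule sum.swap)
    also have "\<dots> = (\<Sum>y\<in>W - {x}. \<Sum>S\<in>{S \<in> P. (x \<in> S) \<noteq> (y \<in> S)}. f S)"
      by (intro sum.cong refl sum.inter_filter[symmetric] finP)
    also have "\<dots> = (\<Sum>y\<in>W - {x}. (\<Sum>S0\<in>Q y. f (insert x S0)) + (\<Sum>S0\<in>Q y. f (insert y S0)))"
      by (rule sum.cong[OF refl], rule sumy)
    also have "\<dots> \<le> (\<Sum>y\<in>W - {x}. 2 * real (2 * k choose k) * s ^ card T)"
    proof (rule sum_mono)
      fix y assume y: "y \<in> W - {x}"
      have "card {x, y} = 2" using y by auto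
      hence cW0: "card (W - {x, y}) = 2 * k" using y xW Suc.prems
        by (simp add: card_Diff_subset)
      have fW0: "finite (W - {x, y})" using Suc.prems by simp
      show "(\<Sum>S0\<in>Q y. f (insert x S0)) + (\<Sum>S0\<in>Q y. f (insert y S0)) \<le> 2 * real (2 * k choose k) * s ^ card T"
      proof (cases "y \<in> T")
        case True
        define R where "R S0 = (\<Prod>i\<in>T - {x} - {y}. if i \<in> S0 then a else b)" for S0
        have eq: "f (insert x S0) + f (insert y S0) = 2 * (a * b) * R S0" if "S0 \<in> Q y" for S0
        proof -
          have nx: "x \<notin> S0" "y \<notin> S0" using that unfolding Q_def by auto
          have yT': "y \<in> T - {x}" using True y by auto
          have "f S = (if x \<in> S then a else b) * ((if y \<in> S then a else b) *
               (\<Prod>i\<in>T - {x} - {y}. if i \<in> S then a else b))" for S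
          proof -
            have "f S = (if x \<in> S then a else b) * (\<Prod>i\<in>T - {x}. if i \<in> S then a else b)"
              unfolding f_def using finT xT by (rule prod.remove)
            moreover have "(\<Prod>i\<in>T - {x}. if i \<in> S then a else b) = (if y \<in> S then a else b) *
               (\<Prod>i\<in>T - {x} - {y}. if i \<in> S then a else b)"
              using finT yT' by (intro prod.remove) auto
            ultimately show ?thesis by simp
          qed
          moreover have "(\<Prod>i\<in>T - {x} - {y}. if i \<in> insert x S0 then a else b) = R S0"
               "(\<Prod>i\<in>T - {x} - {y}. if i \<in> insert y S0 then a else b) = R S0"
            unfolding R_def by (rule prod_cong_mem; auto)+
          ultimately show ?thesis using nx y by auto
        qed
        have cT: "card T = Suc (Suc (card (T - {x} - {y})))"
          using True xT y finT by (metis Diff_iff card_Suc_Diff1 finite_Diff singletonD)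
        have "(\<Sum>S0\<in>Q y. f (insert x S0)) + (\<Sum>S0\<in>Q y. f (insert y S0)) = 2 * (a * b) * G (W - {x, y}) k (T - {x} - {y}) a b"
          unfolding sum.distrib[symmetric] G_def R_def[symmetric] Q_def[symmetric] sum_distrib_left
          using eq by (intro sum.cong) auto
        also have "\<dots> \<le> 2 * (a * b) * (real (2 * k choose k) * s ^ card (T - {x} - {y}))"
        proof (rule mult_left_mono)
          show "G (W - {x, y}) k (T - {x} - {y}) a b \<le> real (2 * k choose k) * s ^ card (T - {x} - {y})"
            unfolding s_def using Suc.prems by (intro Suc.IH[OF fW0 cW0]) auto
        qed (use assms(4,5) in simp)
        also have "\<dots> \<le> 2 * (s * s) * (real (2 * k choose k) * s ^ card (T - {x} - {y}))"
        proof (intro mult_right_mono mult_left_mono)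
          have h: "s * s - a * b = (a - b) * (a - b) / 4" unfolding s_def by (simp add: field_simps)
          have "0 \<le> (a - b) * (a - b) / 4" by simp
          thus "a * b \<le> s * s" using h by linarith
        qed (use s0 in auto)
        also have "\<dots> = 2 * real (2 * k choose k) * s ^ card T" using cT by simp
        finally show ?thesis .
      next
        case False
        define R where "R S0 = (\<Prod>i\<in>T - {x}. if i \<in> S0 then a else b)" for S0
        have eq: "f (insert x S0) + f (insert y S0) = (a + b) * R S0" if "S0 \<in> Q y" for S0
        proof -
          have nx: "x \<notin> S0" using that unfolding Q_def by auto
          have "f S = (if x \<in> S then a else b) * (\<Prod>i\<in>T - {x}. if i \<in> S then a else b)" for S
            unfolding f_def using finT xT by (rule prod.remove)
          moreover have "(\<Prod>i\<in>T - {x}. if i \<in> insert x S0 then a else b) = R S0"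
               "(\<Prod>i\<in>T - {x}. if i \<in> insert y S0 then a else b) = R S0"
            unfolding R_def by (rule prod_cong_mem; use False in auto)+
          ultimately show ?thesis using nx y by (auto simp: algebra_simps)
        qed
        have cT: "card T = Suc (card (T - {x}))"
          using xT finT by (metis card_Suc_Diff1)
        have "(\<Sum>S0\<in>Q y. f (insert x S0)) + (\<Sum>S0\<in>Q y. f (insert y S0)) = (a + b) * G (W - {x, y}) k (T - {x}) a b"
          unfolding sum.distrib[symmetric] G_def R_def[symmetric] Q_def[symmetric] sum_distrib_left
          using eq by (intro sum.cong) auto
        also have "\<dots> \<le> (a + b) * (real (2 * k choose k) * s ^ card (T - {x}))"
        proof (rule mult_left_mono)
          show "G (W - {x, y}) k (T - {x}) a b \<le> real (2 * k choose k) * s ^ card (T - {x})"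
            unfolding s_def using Suc.prems False by (intro Suc.IH[OF fW0 cW0]) auto
        qed (use assms(4,5) in simp)
        also have "\<dots> = 2 * real (2 * k choose k) * s ^ card T" using cT by (simp add: s_def)
        finally show ?thesis .
      qed
    qed
    also have "\<dots> = real (2 * k + 1) * (2 * real (2 * k choose k) * s ^ card T)"
    proof -
      have "card (W - {x}) = 2 * k + 1" using Suc.prems xW by (simp add: card_Diff_singleton)
      thus ?thesis by simp
    qed
    also have "\<dots> = real (Suc k) * (real (2 * Suc k choose Suc k) * s ^ card T)"
    proof -
      have "real (Suc k * (2 * Suc k choose Suc k)) = real (2 * (2 * k + 1) * (2 * k choose k))"
        using binom_even_rel by presburger
      hence h2: "real (Suc k) * real (2 * Suc k choose Suc k) = 2 * real (2 * k + 1) * real (2 * k choose k)"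
        by (simp only: of_nat_mult)
      show ?thesis by (simp only: mult.assoc[symmetric] h2)
    qed
    finally have fin: "real (Suc k) * G W (Suc k) T a b \<le> real (Suc k) * (real (2 * Suc k choose Suc k) * s ^ card T)" .
    show ?thesis unfolding s_def[symmetric]
      by (rule mult_left_le_imp_le[OF fin]) simp
  qed
qed



lemma G_image:
  assumes "inj g"
  shows "G (g ` W) k (g ` T) a b = G W k T a b"
proof -
  have setq: "{S. S \<subseteq> g ` W \<and> card S = k} = image g ` {S. S \<subseteq> W \<and> card S = k}"
  proof (intro set_eqI iffI)
    fix S assume "S \<in> {S. S \<subseteq> g ` W \<and> card S = k}"
    then obtain AA where AA: "AA \<subseteq> W" "S = g ` AA" "card S = k" by (auto simp: subset_image_iff)
    hence "card AA = k" using assms by (metis card_image inj_on_subset subset_UNIV)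
    thus "S \<in> image g ` {S. S \<subseteq> W \<and> card S = k}" using AA by blast
  next
    fix S assume "S \<in> image g ` {S. S \<subseteq> W \<and> card S = k}"
    then obtain AA where AA: "AA \<subseteq> W" "S = g ` AA" "card AA = k" by auto
    hence "card S = k" using assms by (metis card_image inj_on_subset subset_UNIV)
    thus "S \<in> {S. S \<subseteq> g ` W \<and> card S = k}" using AA by blast
  qed
  have injg: "inj_on (image g) X" for X using assms by (meson inj_image_eq_iff inj_onI)
  have injT: "inj_on g T" using assms by (meson inj_on_subset subset_UNIV)
  show ?thesis unfolding G_def setq
    by (simp add: sum.reindex injg prod.reindex injT inj_image_mem_iff[OF assms])
qed

lemma G_insert:
  assumes "finite W" "z \<notin> W" "z \<notin> T"
  shows "G (insert z W) (Suc k) T a b = G W (Suc k) T a b + G W k T a b"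
proof -
  have disj: "{S. S \<subseteq> W \<and> card S = Suc k} \<inter> insert z ` {S. S \<subseteq> W \<and> card S = k} = {}"
    using assms by auto
  have inj: "inj_on (insert z) {S. S \<subseteq> W \<and> card S = k}"
  proof (intro inj_onI)
    fix x y assume "x \<in> {S. S \<subseteq> W \<and> card S = k}" "y \<in> {S. S \<subseteq> W \<and> card S = k}" "insert z x = insert z y"
    moreover have "z \<notin> x" "z \<notin> y" using calculation assms by auto
    ultimately show "x = y" by (metis insert_ident)
  qed
  have mem: "(\<Prod>i\<in>T. if i \<in> insert z S then a else b) = (\<Prod>i\<in>T. if i \<in> S then a else b)" for S
    using assms(3) by (intro prod_cong_mem) auto
  have mem2: "(\<Prod>i\<in>T. if i = z \<or> i \<in> S then a else b) = (\<Prod>i\<in>T. if i \<in> S then a else b)" for S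
    using mem[of S] by simp
  show ?thesis unfolding G_def subsets_insert_split[OF assms(2,1)]
    by (subst sum.union_disjoint) (use assms disj in \<open>simp_all add: sum.reindex inj mem2\<close>)
qed

lemma G_odd:
  assumes "finite W" "card W = 2 * r + 1" "T \<subseteq> W" "0 \<le> a" "0 \<le> b"
  shows "G W r T a b + G W (Suc r) T a b \<le> 2 * real (2 * r + 1 choose r) * ((a + b) / 2) ^ card T"
proof -
  define W' where "W' = insert None (Some ` W)"
  have fW': "finite W'" using assms by (simp add: W'_def)
  have cW': "card W' = 2 * Suc r" using assms by (simp add: W'_def card_image)
  have T': "Some ` T \<subseteq> W'" using assms by (auto simp: W'_def)
  have "G W' (Suc r) (Some ` T) a b = G (Some ` W) (Suc r) (Some ` T) a b + G (Some ` W) r (Some ` T) a b"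
    unfolding W'_def using assms by (intro G_insert) auto
  also have "\<dots> = G W r T a b + G W (Suc r) T a b" by (simp add: G_image)
  finally have eq: "G W' (Suc r) (Some ` T) a b = G W r T a b + G W (Suc r) T a b" .
  have le: "G W' (Suc r) (Some ` T) a b \<le> real (2 * Suc r choose Suc r) * ((a + b) / 2) ^ card (Some ` T)"
    using G_even[OF fW' cW' T' assms(4,5)] .
  have cT: "card (Some ` T) = card T" by (simp add: card_image)
  have cb: "(2 * Suc r choose Suc r) = 2 * (2 * r + 1 choose r)"
  proof -
    have "(2 * Suc r choose Suc r) = (2*r+1 choose r) + (2*r+1 choose Suc r)"
      by simp
    moreover have "(2*r+1 choose Suc r) = (2*r+1 choose r)"
      using binomial_symmetric[of "Suc r" "2*r+1"] by simp
    ultimately show ?thesis by simp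
  qed
  show ?thesis using le unfolding eq cT cb by simp
qed



lemma exp_pmf_subsets:
  fixes U :: "'a set" and a b :: real
  assumes "finite U" "k \<le> card U"
  shows "measure_pmf.expectation (pmf_of_set {S. S \<subseteq> U \<and> card S = k}) (\<lambda>S. \<Prod>i\<in>T. if i \<in> S then a else b)
         = G U k T a b / real (card U choose k)"
proof -
  have fin: "finite {S. S \<subseteq> U \<and> card S = k}" using assms by simp
  have c: "card {S. S \<subseteq> U \<and> card S = k} = card U choose k" using assms by (simp add: n_subsets)
  have ne: "{S. S \<subseteq> U \<and> card S = k} \<noteq> {}"
  proof
    assume h: "{S. S \<subseteq> U \<and> card S = k} = {}"
    from c have "card U choose k = 0" by (simp only: h card.empty)
    thus False using assms by (simp add: binomial_eq_0_iff)
  qed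
  show ?thesis using integral_pmf_of_set[OF ne fin] c unfolding G_def by simp
qed

lemma urn_exp:
  fixes e :: "'v::linorder set" and w :: "'t::finite \<Rightarrow> 'v" and a b :: real
  assumes "T \<subseteq> {i. w i \<in> e}" "0 \<le> a" "0 \<le> b"
  shows "measure_pmf.expectation (urn_draw e w) (\<lambda>S. \<Prod>i\<in>T. if i \<in> S then a else b) \<le> ((a + b) / 2) ^ card T"
proof -
  define U where "U = {i. w i \<in> e}"
  define n where "n = card U"
  define f where "f S = (\<Prod>i\<in>T. if i \<in> S then a else b)" for S :: "'t set"
  define P where "P k = pmf_of_set {S. S \<subseteq> U \<and> card S = k}" for k
  have fU: "finite U" by simp
  have urn: "urn_draw e w = bind_pmf (bernoulli_pmf (1/2)) (\<lambda>c. P (if c then (n + 1) div 2 else n div 2))"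
    unfolding urn_draw_def Let_def U_def n_def P_def ..
  have finP: "finite (set_pmf (P k))" for k by simp
  have "measure_pmf.expectation (urn_draw e w) f =
        (\<Sum>c\<in>UNIV. pmf (bernoulli_pmf (1/2)) c *\<^sub>R measure_pmf.expectation (P (if c then (n + 1) div 2 else n div 2)) f)"
    unfolding urn by (rule pmf_expectation_bind[where A=UNIV]) (auto simp: finP)
  also have "\<dots> = (G U ((n + 1) div 2) T a b / real (n choose ((n + 1) div 2)) + G U (n div 2) T a b / real (n choose (n div 2))) / 2"
    unfolding P_def f_def using fU n_def
    by (simp add: UNIV_bool exp_pmf_subsets)
  also have "\<dots> \<le> ((a + b) / 2) ^ card T"
  proof (cases "even n")
    case True
    then obtain k where k: "n = 2 * k" by blast
    have g: "G U k T a b \<le> real (2 * k choose k) * ((a + b) / 2) ^ card T"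
      using G_even[OF fU _ _ assms(2,3)] k assms(1) n_def U_def by auto
    have pos: "0 < real (2 * k choose k)" by simp
    have "(1 + 2 * k) div 2 = k" by simp
    thus ?thesis using g pos k by (simp add: divide_le_eq mult.commute)
  next
    case False
    then obtain r where r: "n = 2 * r + 1" using oddE by blast
    have g: "G U r T a b + G U (Suc r) T a b \<le> 2 * real (2 * r + 1 choose r) * ((a + b) / 2) ^ card T"
      using G_odd[OF fU _ _ assms(2,3)] r assms(1) n_def U_def by auto
    have pos: "0 < real (2 * r + 1 choose r)" by simp
    have sy: "(2 * r + 1 choose Suc r) = (2 * r + 1 choose r)"
      using binomial_symmetric[of "Suc r" "2*r+1"] by simp
    have d1: "(2 * r + 1 + 1) div 2 = Suc r" "(2 * r + 1) div 2 = r" by simp_all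
    have "(G U (Suc r) T a b / real (2 * r + 1 choose Suc r) + G U r T a b / real (2 * r + 1 choose r)) / 2
         = (G U r T a b + G U (Suc r) T a b) / (2 * real (2 * r + 1 choose r))"
      unfolding sy by (simp add: field_simps)
    also have "\<dots> \<le> ((a + b) / 2) ^ card T" using g pos by (simp add: divide_le_eq mult.commute)
    finally show ?thesis unfolding r d1 .
  qed
  finally show ?thesis unfolding f_def .
qed



lemma matching_edge:
  assumes "matching Mt" "e \<in> Mt"
  shows "card e = 2"
  using assms unfolding matching_def by blast

lemma matching_unique:
  assumes "matching Mt" "e \<in> Mt" "e' \<in> Mt" "u \<in> e" "u \<in> e'"
  shows "e = e'"
  using assms unfolding matching_def by blast

lemma matched_edge_eq:
  assumes "matching Mt" "e \<in> Mt" "u \<in> e"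
  shows "matched_edge Mt u = e"
  unfolding matched_edge_def
proof (rule the_equality)
  show "e \<in> Mt \<and> u \<in> e" using assms by simp
next
  fix e' assume "e' \<in> Mt \<and> u \<in> e'"
  thus "e' = e" using matching_unique[OF assms(1) _ assms(2), of e' u] assms(3) by simp
qed

lemma edge_minmax:
  fixes e :: "'v::{finite,linorder} set"
  assumes "card e = 2"
  shows "e = {Min e, Max e}" "Min e \<noteq> Max e"
proof -
  obtain x y where xy: "e = {x, y}" "x \<noteq> y" using assms by (meson card_2_iff)
  show "e = {Min e, Max e}" "Min e \<noteq> Max e" using xy
    by (simp_all add: min_def max_def insert_commute)
qed

lemma row_matched:
  fixes Mt :: "'v::{finite,linorder} set set"
  assumes "matching Mt" "e \<in> Mt" "u \<in> e"
  shows "(\<Sum>v\<in>UNIV. match_matrix Mt u v * h v) = (h (Min e) + h (Max e)) / 2"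
proof -
  have c2: "card e = 2" using matching_edge assms by blast
  have mm: "match_matrix Mt u v = (if v \<in> e then 1/2 else 0)" for v
  proof (cases "u = v")
    case True thus ?thesis using assms unfolding match_matrix_def by auto
  next
    case False
    have "{u, v} \<in> Mt \<longleftrightarrow> v \<in> e"
    proof
      assume "{u, v} \<in> Mt"
      from matching_unique[OF assms(1) this assms(2), of u] assms(3)
      have "{u, v} = e" by simp
      thus "v \<in> e" by auto
    next
      assume "v \<in> e"
      obtain x y where xy: "e = {x, y}" "x \<noteq> y" using c2 by (meson card_2_iff)
      hence "e = {u, v}" using \<open>v \<in> e\<close> assms(3) False by auto
      thus "{u, v} \<in> Mt" using assms by simp
    qed
    thus ?thesis using False unfolding match_matrix_def by auto
  qed
  have "(\<Sum>v\<in>UNIV. match_matrix Mt u v * h v) = (\<Sum>v\<in>UNIV. if v \<in> e then h v / 2 else 0)"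
    by (intro sum.cong refl) (simp add: mm)
  also have "\<dots> = (\<Sum>v\<in>e. h v / 2)" by (simp add: sum.If_cases)
  also have "\<dots> = (h (Min e) + h (Max e)) / 2"
  proof -
    have "(\<Sum>v\<in>{Min e, Max e}. h v / 2) = (h (Min e) + h (Max e)) / 2"
      using edge_minmax(2)[OF c2] by (simp add: add_divide_distrib)
    thus ?thesis by (simp only: edge_minmax(1)[OF c2, symmetric])
  qed
  finally show ?thesis .
qed

lemma row_unmatched:
  fixes Mt :: "'v::{finite,linorder} set set"
  assumes "\<not> (\<exists>e\<in>Mt. u \<in> e)"
  shows "(\<Sum>v\<in>UNIV. match_matrix Mt u v * h v) = h u"
proof -
  have mm: "match_matrix Mt u v = (if v = u then 1 else 0)" for v
    using assms unfolding match_matrix_def by auto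
  have "(\<Sum>v\<in>UNIV. match_matrix Mt u v * h v) = (\<Sum>v\<in>UNIV. if v = u then h v else 0)"
    by (intro sum.cong refl) (simp add: mm)
  thus ?thesis by simp
qed

lemma step_prod:
  fixes Mt :: "'v::{finite,linorder} set set" and w :: "'t::finite \<Rightarrow> 'v"
    and h :: "'v \<Rightarrow> real" and B :: "'t set"
  assumes mt: "matching Mt" and h0: "\<And>v. 0 \<le> h v"
  shows "measure_pmf.expectation (step_pmf Mt w) (\<lambda>w'. \<Prod>i\<in>B. h (w' i))
         \<le> (\<Prod>i\<in>B. \<Sum>v\<in>UNIV. match_matrix Mt (w i) v * h v)"
proof -
  define B0 where "B0 = {i\<in>B. \<not> (\<exists>e\<in>Mt. w i \<in> e)}"
  define Be where "Be e = {i\<in>B. w i \<in> e}" for e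
  define F where "F = (\<lambda>S i. if \<exists>e\<in>Mt. w i \<in> e
                      then (let e = matched_edge Mt (w i) in if i \<in> S e then Min e else Max e)
                      else w i)"
  define s where "s e = (h (Min e) + h (Max e)) / 2" for e
  have part: "(\<Prod>i\<in>B. g i) = (\<Prod>i\<in>B0. g i) * (\<Prod>e\<in>Mt. \<Prod>i\<in>Be e. g i)" for g :: "'t \<Rightarrow> real"
  proof -
    have disj: "\<forall>e\<in>Mt. \<forall>e'\<in>Mt. e \<noteq> e' \<longrightarrow> Be e \<inter> Be e' = {}"
      using mt unfolding Be_def matching_def by blast
    have u: "(\<Prod>e\<in>Mt. \<Prod>i\<in>Be e. g i) = (\<Prod>i\<in>(\<Union>e\<in>Mt. Be e). g i)"
      by (rule prod.UNION_disjoint[symmetric]) (use disj in auto)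
    have eqB: "B = B0 \<union> (\<Union>e\<in>Mt. Be e)" and dj: "B0 \<inter> (\<Union>e\<in>Mt. Be e) = {}"
      unfolding B0_def Be_def by auto
    have "(\<Prod>i\<in>B. g i) = (\<Prod>i\<in>B0 \<union> (\<Union>e\<in>Mt. Be e). g i)" using eqB by simp
    also have "\<dots> = (\<Prod>i\<in>B0. g i) * (\<Prod>i\<in>(\<Union>e\<in>Mt. Be e). g i)"
      by (rule prod.union_disjoint) (use dj in auto)
    finally show ?thesis using u by simp
  qed
  define X where "X S = (\<Prod>e\<in>Mt. \<Prod>i\<in>Be e. if i \<in> S e then h (Min e) else h (Max e))" for S
  define c where "c = (\<Prod>i\<in>B0. h (w i))"
  have key: "(\<Prod>i\<in>B. h (F S i)) = c * X S" for S
  proof -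
    have "(\<Prod>i\<in>B0. h (F S i)) = c"
      unfolding c_def by (intro prod.cong refl) (auto simp: F_def B0_def)
    moreover have "(\<Prod>e\<in>Mt. \<Prod>i\<in>Be e. h (F S i)) = X S"
      unfolding X_def
    proof (intro prod.cong refl)
      fix e i assume e: "e \<in> Mt" and i: "i \<in> Be e"
      hence wi: "w i \<in> e" unfolding Be_def by auto
      have "matched_edge Mt (w i) = e" using matched_edge_eq[OF mt e wi] .
      thus "h (F S i) = (if i \<in> S e then h (Min e) else h (Max e))"
        unfolding F_def using e wi by auto
    qed
    ultimately show ?thesis using part[of "\<lambda>i. h (F S i)"] by simp
  qed
  have stepF: "step_pmf Mt w = map_pmf F (Pi_pmf Mt {} (\<lambda>e. urn_draw e w))"
    unfolding step_pmf_def F_def ..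
  have finMt: "finite Mt" by simp
  have "measure_pmf.expectation (step_pmf Mt w) (\<lambda>w'. \<Prod>i\<in>B. h (w' i))
      = measure_pmf.expectation (Pi_pmf Mt {} (\<lambda>e. urn_draw e w)) (\<lambda>S. c * X S)"
    unfolding stepF integral_map_pmf key ..
  also have "\<dots> = c * measure_pmf.expectation (Pi_pmf Mt {} (\<lambda>e. urn_draw e w)) X"
    by (rule integral_mult_right_zero)
  also have "\<dots> = c * (\<Prod>e\<in>Mt. measure_pmf.expectation (urn_draw e w)
                     (\<lambda>S. \<Prod>i\<in>Be e. if i \<in> S then h (Min e) else h (Max e)))"
    unfolding X_def
    by (subst expectation_prod_Pi_pmf) 
       (auto intro!: integrable_measure_pmf_finite prod_nonneg simp: h0)
  also have "\<dots> \<le> c * (\<Prod>e\<in>Mt. s e ^ card (Be e))"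
  proof (rule mult_left_mono)
    show "0 \<le> c" unfolding c_def by (intro prod_nonneg) (simp add: h0)
    show "(\<Prod>e\<in>Mt. measure_pmf.expectation (urn_draw e w)
                     (\<lambda>S. \<Prod>i\<in>Be e. if i \<in> S then h (Min e) else h (Max e))) \<le> (\<Prod>e\<in>Mt. s e ^ card (Be e))"
    proof (rule prod_mono, rule conjI)
      fix e assume "e \<in> Mt"
      show "0 \<le> measure_pmf.expectation (urn_draw e w)
                     (\<lambda>S. \<Prod>i\<in>Be e. if i \<in> S then h (Min e) else h (Max e))"
        by (intro integral_nonneg_AE AE_pmfI prod_nonneg) (simp add: h0)
      show "measure_pmf.expectation (urn_draw e w)
                     (\<lambda>S. \<Prod>i\<in>Be e. if i \<in> S then h (Min e) else h (Max e)) \<le> s e ^ card (Be e)"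
        unfolding s_def by (rule urn_exp) (auto simp: Be_def h0)
    qed
  qed
  also have "\<dots> = (\<Prod>i\<in>B. \<Sum>v\<in>UNIV. match_matrix Mt (w i) v * h v)"
  proof -
    have "(\<Prod>i\<in>B0. \<Sum>v\<in>UNIV. match_matrix Mt (w i) v * h v) = c"
      unfolding c_def B0_def by (intro prod.cong refl) (simp add: row_unmatched)
    moreover have "(\<Prod>e\<in>Mt. \<Prod>i\<in>Be e. \<Sum>v\<in>UNIV. match_matrix Mt (w i) v * h v) = (\<Prod>e\<in>Mt. s e ^ card (Be e))"
    proof (intro prod.cong refl)
      fix e assume e: "e \<in> Mt"
      have "(\<Prod>i\<in>Be e. \<Sum>v\<in>UNIV. match_matrix Mt (w i) v * h v) = (\<Prod>i\<in>Be e. s e)"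
        unfolding s_def by (intro prod.cong refl) (use row_matched[OF mt e] in \<open>auto simp: Be_def\<close>)
      thus "(\<Prod>i\<in>Be e. \<Sum>v\<in>UNIV. match_matrix Mt (w i) v * h v) = s e ^ card (Be e)" by simp
    qed
    ultimately show ?thesis using part[of "\<lambda>i. \<Sum>v\<in>UNIV. match_matrix Mt (w i) v * h v"] by simp
  qed
  finally show ?thesis .
qed



lemma row_sum_match:
  fixes Mt :: "'v::{finite,linorder} set set"
  assumes "matching Mt"
  shows "(\<Sum>v\<in>UNIV. match_matrix Mt u v) = 1"
proof (cases "\<exists>e\<in>Mt. u \<in> e")
  case True
  then obtain e where "e \<in> Mt" "u \<in> e" by blast
  from row_matched[OF assms this, of "\<lambda>_. 1"] show ?thesis by simp
next
  case False
  from row_unmatched[OF False, of "\<lambda>_. 1"] show ?thesis by simp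
qed

lemma row_sum_prod:
  fixes M :: "nat \<Rightarrow> 'v::{finite,linorder} set set"
  assumes "\<And>t. matching (M t)"
  shows "(\<Sum>v\<in>UNIV. mat_prod_from M a n u v) = 1"
proof (induction n arbitrary: u)
  case 0
  show ?case by (simp add: id_matrix_def)
next
  case (Suc n)
  have "(\<Sum>v\<in>UNIV. mat_prod_from M a (Suc n) u v)
      = (\<Sum>v\<in>UNIV. \<Sum>x\<in>UNIV. mat_prod_from M a n u x * match_matrix (M (a + n)) x v)"
    by (simp add: mat_mult_def)
  also have "\<dots> = (\<Sum>x\<in>UNIV. \<Sum>v\<in>UNIV. mat_prod_from M a n u x * match_matrix (M (a + n)) x v)"
    by (rule sum.swap)
  also have "\<dots> = (\<Sum>x\<in>UNIV. mat_prod_from M a n u x * (\<Sum>v\<in>UNIV. match_matrix (M (a + n)) x v))"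
    by (simp add: sum_distrib_left)
  also have "\<dots> = 1" using row_sum_match[OF assms] Suc.IH by simp
  finally show ?case .
qed

lemma match_nonneg: "0 \<le> match_matrix Mt u v"
  unfolding match_matrix_def by auto

lemma run_prod:
  fixes M :: "nat \<Rightarrow> 'v::{finite,linorder} set set" and w0 :: "'t::finite \<Rightarrow> 'v"
  assumes mt: "\<And>t. matching (M t)"
  shows "(\<forall>v. 0 \<le> h v) \<Longrightarrow> measure_pmf.expectation (run_pmf M t1 w0 n) (\<lambda>w. \<Prod>i\<in>B. h (w i))
         \<le> (\<Prod>i\<in>B. \<Sum>v\<in>UNIV. mat_prod_from M (Suc t1) n (w0 i) v * h v)"
proof (induction n arbitrary: h)
  case 0
  have "(\<Sum>v\<in>UNIV. id_matrix u v * h v) = h u" for u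
  proof -
    have "(\<Sum>v\<in>UNIV. id_matrix u v * h v) = (\<Sum>v\<in>UNIV. if v = u then h v else 0)"
      by (intro sum.cong refl) (simp add: id_matrix_def)
    thus ?thesis by simp
  qed
  thus ?case by simp
next
  case (Suc n)
  define Mt where "Mt = M (t1 + Suc n)"
  define g where "g x = (\<Sum>v\<in>UNIV. match_matrix Mt x v * h v)" for x
  have g0: "\<forall>x. 0 \<le> g x" unfolding g_def using Suc.prems
    by (auto intro!: sum_nonneg mult_nonneg_nonneg match_nonneg)
  have "measure_pmf.expectation (run_pmf M t1 w0 (Suc n)) (\<lambda>w. \<Prod>i\<in>B. h (w i))
      = (\<Sum>a\<in>UNIV. pmf (run_pmf M t1 w0 n) a *\<^sub>R
            measure_pmf.expectation (step_pmf Mt a) (\<lambda>w. \<Prod>i\<in>B. h (w i)))"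
    unfolding run_pmf.simps Mt_def by (rule pmf_expectation_bind[where A=UNIV]) auto
  also have "\<dots> \<le> (\<Sum>a\<in>UNIV. pmf (run_pmf M t1 w0 n) a *\<^sub>R (\<Prod>i\<in>B. g (a i)))"
  proof (intro sum_mono)
    fix a :: "'t \<Rightarrow> 'v"
    have "measure_pmf.expectation (step_pmf Mt a) (\<lambda>w. \<Prod>i\<in>B. h (w i)) \<le> (\<Prod>i\<in>B. g (a i))"
      unfolding g_def Mt_def using Suc.prems by (intro step_prod[OF mt]) auto
    thus "pmf (run_pmf M t1 w0 n) a *\<^sub>R measure_pmf.expectation (step_pmf Mt a) (\<lambda>w. \<Prod>i\<in>B. h (w i))
          \<le> pmf (run_pmf M t1 w0 n) a *\<^sub>R (\<Prod>i\<in>B. g (a i))"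
      by (simp add: mult_left_mono)
  qed
  also have "\<dots> = measure_pmf.expectation (run_pmf M t1 w0 n) (\<lambda>w. \<Prod>i\<in>B. g (w i))"
    by (rule integral_measure_pmf[symmetric]) auto
  also have "\<dots> \<le> (\<Prod>i\<in>B. \<Sum>v\<in>UNIV. mat_prod_from M (Suc t1) n (w0 i) v * g v)"
    using Suc.IH[OF g0] .
  also have "\<dots> = (\<Prod>i\<in>B. \<Sum>v\<in>UNIV. mat_prod_from M (Suc t1) (Suc n) (w0 i) v * h v)"
  proof (intro prod.cong refl)
    fix i
    have "Suc t1 + n = t1 + Suc n" by simp
    show "(\<Sum>v\<in>UNIV. mat_prod_from M (Suc t1) n (w0 i) v * g v) =
          (\<Sum>v\<in>UNIV. mat_prod_from M (Suc t1) (Suc n) (w0 i) v * h v)"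
    proof -
      let ?P = "mat_prod_from M (Suc t1) n (w0 i)"
      let ?m = "match_matrix (M (t1 + Suc n))"
      have "(\<Sum>v\<in>UNIV. ?P v * g v) = (\<Sum>v\<in>UNIV. \<Sum>x\<in>UNIV. ?P v * ?m v x * h x)"
        unfolding g_def Mt_def by (simp add: sum_distrib_left mult.assoc)
      also have "\<dots> = (\<Sum>x\<in>UNIV. \<Sum>v\<in>UNIV. ?P v * ?m v x * h x)" by (rule sum.swap)
      also have "\<dots> = (\<Sum>x\<in>UNIV. (\<Sum>v\<in>UNIV. ?P v * ?m v x) * h x)"
        by (simp add: sum_distrib_right)
      also have "\<dots> = (\<Sum>v\<in>UNIV. mat_prod_from M (Suc t1) (Suc n) (w0 i) v * h v)"
        using \<open>Suc t1 + n = t1 + Suc n\<close> by (simp add: mat_mult_def)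
      finally show ?thesis .
    qed
  qed
  finally show ?case .
qed

theorem lemma3p2:
  fixes E :: "'v::{finite,linorder} set set"
    and M :: "nat \<Rightarrow> 'v set set"
    and w0 :: "'t::finite \<Rightarrow> 'v"
    and B :: "'t set"
    and D :: "'v set"
    and t1 t2 :: nat
  assumes "\<forall>e\<in>E. card e = 2"
    and "\<forall>t. matching (M t) \<and> M t \<subseteq> E"
    and "t1 < t2"
  shows "measure_pmf.prob (config_at M t1 w0 t2) {w. \<forall>i\<in>B. w i \<in> D}
           \<le> (\<Prod>i\<in>B. mat_row_set (mat_interval M (Suc t1) t2) (w0 i) D)
       \<and> (\<Prod>i\<in>B. mat_row_set (mat_interval M (Suc t1) t2) (w0 i) D)
           = (\<Prod>i\<in>B. measure_pmf.prob (config_at M t1 w0 t2) {w. w i \<in> D})"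
proof -
  have mt: "\<And>t. matching (M t)" using assms(2) by blast
  define P where "P = mat_prod_from M (Suc t1) (t2 - t1)"
  define p where "p = run_pmf M t1 w0 (t2 - t1)"
  have ci: "config_at M t1 w0 t2 = p" by (simp add: config_at_def p_def)
  have mi: "mat_interval M (Suc t1) t2 = P" by (simp add: mat_interval_def P_def)
  have rowD: "(\<Sum>v\<in>UNIV. P u v * indicator D' v) = mat_row_set P u D'" for u D'
  proof -
    have "(\<Sum>v\<in>UNIV. P u v * indicator D' v) = (\<Sum>v\<in>UNIV. if v \<in> D' then P u v else 0)"
      by (intro sum.cong refl) (simp add: indicator_def)
    thus ?thesis unfolding mat_row_set_def by (simp add: sum.If_cases)
  qed
  have probE: "measure_pmf.prob p {w. \<forall>i\<in>B'. w i \<in> D'} = measure_pmf.expectation p (\<lambda>w. \<Prod>i\<in>B'. indicator D' (w i))"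
    for B' :: "'t set" and D'
  proof -
    have "(\<lambda>w. \<Prod>i\<in>B'. indicator D' (w i) :: real) = indicator {w. \<forall>i\<in>B'. w i \<in> D'}"
    proof
      fix w :: "'t \<Rightarrow> 'v"
      show "(\<Prod>i\<in>B'. indicator D' (w i) :: real) = indicator {w. \<forall>i\<in>B'. w i \<in> D'} w"
      proof (cases "\<forall>i\<in>B'. w i \<in> D'")
        case True thus ?thesis by simp
      next
        case False
        then obtain i where "i \<in> B'" "w i \<notin> D'" by blast
        thus ?thesis using False by (simp add: prod_zero_iff) (metis indicator_simps(2))
      qed
    qed
    thus ?thesis by simp
  qed
  have le: "measure_pmf.prob p {w. \<forall>i\<in>B'. w i \<in> D'} \<le> (\<Prod>i\<in>B'. mat_row_set P (w0 i) D')" for B' D'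
  proof -
    have r: "measure_pmf.expectation p (\<lambda>w. \<Prod>i\<in>B'. indicator D' (w i))
        \<le> (\<Prod>i\<in>B'. \<Sum>v\<in>UNIV. P (w0 i) v * indicator D' v)"
      unfolding p_def P_def by (rule run_prod) (use mt in auto)
    show ?thesis using r unfolding probE rowD .
  qed
  have eq1: "measure_pmf.prob p {w. w i \<in> D} = mat_row_set P (w0 i) D" for i
  proof -
    have l1: "measure_pmf.prob p {w. w i \<in> D} \<le> mat_row_set P (w0 i) D"
      using le[of "{i}" D] by simp
    have l2: "measure_pmf.prob p {w. w i \<in> - D} \<le> mat_row_set P (w0 i) (- D)"
      using le[of "{i}" "- D"] by simp
    have c1: "measure_pmf.prob p {w. w i \<in> - D} = 1 - measure_pmf.prob p {w. w i \<in> D}"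
    proof -
      have "{w. w i \<in> - D} = UNIV - {w. w i \<in> D}" by auto
      thus ?thesis using measure_pmf.prob_compl[of "{w. w i \<in> D}" p] by simp
    qed
    have c2: "mat_row_set P (w0 i) (- D) = 1 - mat_row_set P (w0 i) D"
    proof -
      have "(\<Sum>v\<in>UNIV. P (w0 i) v) = (\<Sum>v\<in>UNIV - D. P (w0 i) v) + (\<Sum>v\<in>D. P (w0 i) v)"
        by (rule sum.subset_diff) auto
      moreover have "(\<Sum>v\<in>UNIV. P (w0 i) v) = 1" unfolding P_def by (rule row_sum_prod[OF mt])
      ultimately show ?thesis unfolding mat_row_set_def by (simp add: Compl_eq_Diff_UNIV)
    qed
    show ?thesis using l1 l2 c1 c2 by linarith
  qed
  show ?thesis unfolding ci mi using le[of B D] eq1 by simp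
qed

end
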